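(* Let $G$ be an infinite totally bounded topological group with identity $e$, and let $\vec m=(m_1,\dots,m_k)\in\mathbb{Z}^k$ satisfy $m_1+\dots+m_k=0$. Then every neighbourhood $U$ of $e$ in $G$ is a Ramsey $\vec m$-product subset of $G$.
   Context: A subset $A$ of a group $G$ is a Ramsey $\vec m$-product subset, for $\vec m=(m_1,\dots,m_k)\in\mathbb{Z}^k$, if every infinite subset $X\subseteq G$ contains pairwise distinct $x_1,\dots,x_k\in X$ such that $x_{\sigma(1)}^{m_1}x_{\sigma(2)}^{m_2}\cdots x_{\sigma(k)}^{m_k}\in A$ for every permutation $\sigma\in S_k$. *)

theory Defs
  imports "HOL-Analysis.Analysis" "HOL-Algebra.Group" "HOL-Combinatorics.Permutations"
begin

definition topological_group :: "('a, 'b) monoid_scheme \<Rightarrow> 'a topology \<Rightarrow> bool" where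
  "topological_group G T \<longleftrightarrow> group G \<and> topspace T = carrier G
     \<and> continuous_map (prod_topology T T) T (\<lambda>p. fst p \<otimes>\<^bsub>G\<^esub> snd p)
     \<and> continuous_map T T (\<lambda>x. inv\<^bsub>G\<^esub> x)"

definition nbhd :: "'a topology \<Rightarrow> 'a \<Rightarrow> 'a set \<Rightarrow> bool" where
  "nbhd T x U \<longleftrightarrow> U \<subseteq> topspace T \<and> (\<exists>V. openin T V \<and> x \<in> V \<and> V \<subseteq> U)"

definition totally_bounded_group :: "('a, 'b) monoid_scheme \<Rightarrow> 'a topology \<Rightarrow> bool" where
  "totally_bounded_group G T \<longleftrightarrow>
     (\<forall>U. nbhd T \<one>\<^bsub>G\<^esub> U \<longrightarrow>
        (\<exists>F. finite F \<and> F \<subseteq> carrier G \<and>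
             carrier G = {f \<otimes>\<^bsub>G\<^esub> u | f u. f \<in> F \<and> u \<in> U}))"

definition gprod :: "('a, 'b) monoid_scheme \<Rightarrow> 'a list \<Rightarrow> 'a" where
  "gprod G xs = foldr (\<lambda>x y. x \<otimes>\<^bsub>G\<^esub> y) xs \<one>\<^bsub>G\<^esub>"

text \<open>Ramsey m-product subset, for m = (m_1,...,m_k) given as a list of length k
(indices shifted to 0..k-1).\<close>
definition ramsey_product_subset ::
    "('a, 'b) monoid_scheme \<Rightarrow> int list \<Rightarrow> 'a set \<Rightarrow> bool" where
  "ramsey_product_subset G m A \<longleftrightarrow>
     (\<forall>X. X \<subseteq> carrier G \<and> infinite X \<longrightarrow>
        (\<exists>x. (\<forall>i<length m. x i \<in> X) \<and> inj_on x {..<length m} \<and>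
             (\<forall>\<sigma>. \<sigma> permutes {..<length m} \<longrightarrow>
                gprod G (map (\<lambda>i. x (\<sigma> i) [^]\<^bsub>G\<^esub> (m ! i)) [0..<length m]) \<in> A)))"

end

theory Submission
  imports Defs begin

fun prods :: "('a,'b) monoid_scheme \<Rightarrow> 'a set \<Rightarrow> nat \<Rightarrow> 'a set" where
  "prods G S 0 = {\<one>\<^bsub>G\<^esub>}"
| "prods G S (Suc n) = {a \<otimes>\<^bsub>G\<^esub> b | a b. a \<in> S \<and> b \<in> prods G S n}"

context group begin

lemma inv_cancel_l: "x \<in> carrier G \<Longrightarrow> y \<in> carrier G \<Longrightarrow> inv x \<otimes> (x \<otimes> y) = y"
  by (simp add: m_assoc[symmetric])
lemma inv_cancel_r: "x \<in> carrier G \<Longrightarrow> y \<in> carrier G \<Longrightarrow> x \<otimes> (inv x \<otimes> y) = y"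
  by (simp add: m_assoc[symmetric])

lemma prods_carrier: "S \<subseteq> carrier G \<Longrightarrow> prods G S n \<subseteq> carrier G"
  by (induct n) auto

lemma prods_mono: "S \<subseteq> S' \<Longrightarrow> prods G S n \<subseteq> prods G S' n"
  by (induct n) auto

lemma prods_add: "S \<subseteq> carrier G \<Longrightarrow> a \<in> prods G S n \<Longrightarrow> b \<in> prods G S k \<Longrightarrow> a \<otimes> b \<in> prods G S (n+k)"
proof (induct n arbitrary: a)
  case 0
  have "b \<in> carrier G" using 0 prods_carrier by auto
  then show ?case using 0 by simp
next
  case (Suc n)
  then obtain a1 a2 where a: "a = a1 \<otimes> a2" "a1 \<in> S" "a2 \<in> prods G S n" by auto
  have "a2 \<otimes> b \<in> prods G S (n+k)" using Suc a by auto
  moreover have "a \<otimes> b = a1 \<otimes> (a2 \<otimes> b)"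
  proof -
    have "a1 \<in> carrier G" "a2 \<in> carrier G" "b \<in> carrier G"
      using a(2,3) Suc.prems Suc.hyps prods_carrier[of S] by auto
    then show ?thesis using a(1) by (simp add: m_assoc)
  qed
  ultimately show ?case using a by auto
qed

lemma prods_one: "S \<subseteq> carrier G \<Longrightarrow> s \<in> S \<Longrightarrow> s \<in> prods G S (Suc 0)"
proof -
  assume "S \<subseteq> carrier G" "s \<in> S"
  then have "s = s \<otimes> \<one> \<and> s \<in> S" by auto
  then show ?thesis by auto
qed

lemma prods_conj:
  assumes S: "S \<subseteq> carrier G" and hc: "\<And>g s. g \<in> carrier G \<Longrightarrow> s \<in> S \<Longrightarrow> g \<otimes> s \<otimes> inv g \<in> S"
  shows "g \<in> carrier G \<Longrightarrow> a \<in> prods G S n \<Longrightarrow> g \<otimes> a \<otimes> inv g \<in> prods G S n"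
proof (induct n arbitrary: a)
  case 0 then show ?case by simp
next
  case (Suc n)
  then obtain a1 a2 where a: "a = a1 \<otimes> a2" "a1 \<in> S" "a2 \<in> prods G S n" by auto
  have c: "a1 \<in> carrier G" "a2 \<in> carrier G" using a S prods_carrier by auto
  have "g \<otimes> a \<otimes> inv g = (g \<otimes> a1 \<otimes> inv g) \<otimes> (g \<otimes> a2 \<otimes> inv g)"
    using c Suc(2) a(1) by (simp add: m_assoc inv_cancel_l)
  moreover have "g \<otimes> a1 \<otimes> inv g \<in> S" using hc Suc.prems(1) a(2) by auto
  moreover have "g \<otimes> a2 \<otimes> inv g \<in> prods G S n" using Suc.hyps Suc.prems(1) a(3) by auto
  ultimately show ?case by auto
qed

lemma prods_inv:
  assumes S: "S \<subseteq> carrier G" and hi: "\<And>s. s \<in> S \<Longrightarrow> inv s \<in> S"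
  shows "a \<in> prods G S n \<Longrightarrow> inv a \<in> prods G S n"
proof (induct n arbitrary: a)
  case 0 then show ?case by simp
next
  case (Suc n)
  then obtain a1 a2 where a: "a = a1 \<otimes> a2" "a1 \<in> S" "a2 \<in> prods G S n" by auto
  have c: "a1 \<in> carrier G" "a2 \<in> carrier G" using a S prods_carrier by auto
  have "inv a = inv a2 \<otimes> inv a1" using a c by (simp add: inv_mult_group)
  moreover have "inv a2 \<otimes> inv a1 \<in> prods G S (n + Suc 0)"
    by (rule prods_add[OF S]) (use Suc a hi S prods_one in auto)
  ultimately show ?case by simp
qed

lemma pow_nat_decomp:
  assumes S: "S \<subseteq> carrier G" and hc: "\<And>g s. g \<in> carrier G \<Longrightarrow> s \<in> S \<Longrightarrow> g \<otimes> s \<otimes> inv g \<in> S"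
    and a: "a \<in> carrier G" and w: "w \<in> S"
  shows "\<exists>c\<in>prods G S n. (a \<otimes> w) [^] n = c \<otimes> a [^] n"
proof (induct n)
  case 0 then show ?case by simp
next
  case (Suc n)
  then obtain c where c: "c \<in> prods G S n" "(a \<otimes> w) [^] n = c \<otimes> a [^] n" by auto
  have cc: "c \<in> carrier G" using c S prods_carrier by auto
  have wc: "w \<in> carrier G" using w S by auto
  define d where "d = a [^] Suc n \<otimes> w \<otimes> inv (a [^] Suc n)"
  have d: "d \<in> S" unfolding d_def using hc a w by auto
  have "(a \<otimes> w) [^] Suc n = c \<otimes> d \<otimes> a [^] Suc n"
    using c(2) cc wc a unfolding d_def by (simp add: m_assoc nat_pow_Suc)
  moreover have "c \<otimes> d \<in> prods G S (n + Suc 0)"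
    by (rule prods_add[OF S c(1)]) (use d S prods_one in auto)
  ultimately show ?case by auto
qed

lemma pow_int_decomp:
  assumes S: "S \<subseteq> carrier G" and hc: "\<And>g s. g \<in> carrier G \<Longrightarrow> s \<in> S \<Longrightarrow> g \<otimes> s \<otimes> inv g \<in> S"
    and hi: "\<And>s. s \<in> S \<Longrightarrow> inv s \<in> S"
    and a: "a \<in> carrier G" and w: "w \<in> S"
  shows "\<exists>c\<in>prods G S (nat \<bar>k\<bar>). (a \<otimes> w) [^] k = c \<otimes> a [^] k"
proof (cases "k \<ge> 0")
  case True
  then obtain n where k: "k = int n" by (metis nonneg_eq_int)
  show ?thesis using pow_nat_decomp[OF S hc a w, of n] by (simp add: k int_pow_int)
next
  case False
  then obtain n where k: "k = - int n" by (metis minus_minus neg_0_le_iff_le nle_le nonneg_eq_int)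
  obtain c where c: "c \<in> prods G S n" "(a \<otimes> w) [^] n = c \<otimes> a [^] n"
    using pow_nat_decomp[OF S hc a w, of n] by auto
  have cc: "c \<in> carrier G" using c S prods_carrier by auto
  have wc: "w \<in> carrier G" using w S by auto
  define d where "d = inv (a [^] n) \<otimes> inv c \<otimes> inv (inv (a [^] n))"
  have d: "d \<in> prods G S n" unfolding d_def
    by (rule prods_conj[OF S hc]) (use a c prods_inv[OF S hi] in auto)
  have "(a \<otimes> w) [^] k = inv (c \<otimes> a [^] n)"
    using a wc by (simp add: k int_pow_neg_int c(2))
  also have "\<dots> = d \<otimes> a [^] k"
    using a cc unfolding d_def by (simp add: k int_pow_neg_int inv_mult_group m_assoc)
  finally show ?thesis using d k by auto
qed

lemma prod_list_decomp:
  assumes S: "S \<subseteq> carrier G" and hc: "\<And>g s. g \<in> carrier G \<Longrightarrow> s \<in> S \<Longrightarrow> g \<otimes> s \<otimes> inv g \<in> S"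
    and hi: "\<And>s. s \<in> S \<Longrightarrow> inv s \<in> S"
    and a: "a \<in> carrier G"
  shows "(\<forall>i\<in>set is. w i \<in> S) \<Longrightarrow> \<exists>c\<in>prods G S (sum_list (map (\<lambda>i. nat \<bar>mm i\<bar>) is)).
     gprod G (map (\<lambda>i. (a \<otimes> w i) [^] (mm i)) is) = c \<otimes> a [^] (sum_list (map mm is))"
proof (induct "is")
  case Nil then show ?case by (simp add: gprod_def)
next
  case (Cons i "is")
  then obtain c2 where c2: "c2 \<in> prods G S (sum_list (map (\<lambda>i. nat \<bar>mm i\<bar>) is))"
     "gprod G (map (\<lambda>i. (a \<otimes> w i) [^] (mm i)) is) = c2 \<otimes> a [^] (sum_list (map mm is))" by auto
  obtain c1 where c1: "c1 \<in> prods G S (nat \<bar>mm i\<bar>)" "(a \<otimes> w i) [^] (mm i) = c1 \<otimes> a [^] (mm i)"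
    using pow_int_decomp[OF S hc hi a, of "w i" "mm i"] Cons(2) by auto
  have cc: "c1 \<in> carrier G" "c2 \<in> carrier G" using c1 c2 S prods_carrier by auto
  define d where "d = a [^] (mm i) \<otimes> c2 \<otimes> inv (a [^] (mm i))"
  have d: "d \<in> prods G S (sum_list (map (\<lambda>i. nat \<bar>mm i\<bar>) is))" unfolding d_def
    by (rule prods_conj[OF S hc]) (use a c2 in auto)
  have "gprod G (map (\<lambda>i. (a \<otimes> w i) [^] (mm i)) (i # is))
      = (a \<otimes> w i) [^] (mm i) \<otimes> gprod G (map (\<lambda>i. (a \<otimes> w i) [^] (mm i)) is)"
    by (simp add: gprod_def)
  also have "\<dots> = (c1 \<otimes> d) \<otimes> a [^] (sum_list (map mm (i # is)))"
    using c1(2) c2(2) cc a unfolding d_def by (simp add: m_assoc int_pow_mult inv_cancel_l)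
  finally show ?case using prods_add[OF S c1(1) d] by auto
qed

end

lemma tg_mult_open:
  assumes tg: "topological_group G T" and Q: "openin T Q" "\<one>\<^bsub>G\<^esub> \<in> Q"
  shows "\<exists>A B. openin T A \<and> openin T B \<and> \<one>\<^bsub>G\<^esub> \<in> A \<and> \<one>\<^bsub>G\<^esub> \<in> B \<and> (\<forall>a\<in>A. \<forall>b\<in>B. a \<otimes>\<^bsub>G\<^esub> b \<in> Q)"
proof -
  have grp: "group G" and top: "topspace T = carrier G"
    and cm: "continuous_map (prod_topology T T) T (\<lambda>p. fst p \<otimes>\<^bsub>G\<^esub> snd p)"
    using tg unfolding topological_group_def by auto
  define P where "P = {p \<in> topspace (prod_topology T T). fst p \<otimes>\<^bsub>G\<^esub> snd p \<in> Q}"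
  have op: "openin (prod_topology T T) P" unfolding P_def using openin_continuous_map_preimage[OF cm Q(1)] .
  have one: "\<one>\<^bsub>G\<^esub> \<in> carrier G" using grp by (rule monoid.one_closed[OF group.is_monoid])
  have oo: "\<one>\<^bsub>G\<^esub> \<otimes>\<^bsub>G\<^esub> \<one>\<^bsub>G\<^esub> = \<one>\<^bsub>G\<^esub>" using grp by (simp add: group.is_monoid monoid.l_one one)
  have "(\<one>\<^bsub>G\<^esub>, \<one>\<^bsub>G\<^esub>) \<in> P"
    unfolding P_def topspace_prod_topology using Q(2) one top oo by simp
  note ex = openin_prod_topology_alt[THEN iffD1, OF op, rule_format, OF this]
  then obtain A B where AB: "openin T A" "openin T B" "\<one>\<^bsub>G\<^esub> \<in> A" "\<one>\<^bsub>G\<^esub> \<in> B" "A \<times> B \<subseteq> P"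
    by (elim exE conjE)
  have "\<forall>a\<in>A. \<forall>b\<in>B. a \<otimes>\<^bsub>G\<^esub> b \<in> Q"
  proof (intro ballI)
    fix a b assume "a \<in> A" "b \<in> B"
    then have "(a, b) \<in> P" using AB(5) by blast
    then show "a \<otimes>\<^bsub>G\<^esub> b \<in> Q" unfolding P_def by simp
  qed
  then show ?thesis using AB(1-4) by blast
qed


lemma tg_small_prods:
  assumes tg: "topological_group G T"
  shows "openin T Q \<Longrightarrow> \<one>\<^bsub>G\<^esub> \<in> Q \<Longrightarrow> \<exists>V. openin T V \<and> \<one>\<^bsub>G\<^esub> \<in> V \<and> prods G V n \<subseteq> Q"
proof (induct n arbitrary: Q)
  case 0
  then show ?case by auto
next
  case (Suc n)
  obtain A B where AB: "openin T A" "openin T B" "\<one>\<^bsub>G\<^esub> \<in> A" "\<one>\<^bsub>G\<^esub> \<in> B" "\<forall>a\<in>A. \<forall>b\<in>B. a \<otimes>\<^bsub>G\<^esub> b \<in> Q"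
    using tg_mult_open[OF tg Suc.prems] by blast
  obtain V' where V': "openin T V'" "\<one>\<^bsub>G\<^esub> \<in> V'" "prods G V' n \<subseteq> B"
    using Suc.hyps[OF AB(2,4)] by blast
  have grp: "group G" using tg unfolding topological_group_def by auto
  have "prods G (A \<inter> V') n \<subseteq> B" using group.prods_mono[OF grp, of "A \<inter> V'" V' n] V' by auto
  then have "prods G (A \<inter> V') (Suc n) \<subseteq> Q" using AB(5) by auto
  moreover have "openin T (A \<inter> V')" using AB V' by auto
  ultimately show ?case using AB V' by blast
qed

lemma tg_conj_cont:
  assumes tg: "topological_group G T" and f: "f \<in> carrier G"
  shows "continuous_map T T (\<lambda>x. inv\<^bsub>G\<^esub> f \<otimes>\<^bsub>G\<^esub> x \<otimes>\<^bsub>G\<^esub> f)"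
proof -
  have grp: "group G" and top: "topspace T = carrier G"
    and cm: "continuous_map (prod_topology T T) T (\<lambda>p. fst p \<otimes>\<^bsub>G\<^esub> snd p)"
    using tg unfolding topological_group_def by auto
  have fi: "inv\<^bsub>G\<^esub> f \<in> topspace T" using f grp top by simp
  have c1: "continuous_map T T (\<lambda>x. inv\<^bsub>G\<^esub> f \<otimes>\<^bsub>G\<^esub> x)"
  proof -
    have k: "continuous_map T T (\<lambda>x. inv\<^bsub>G\<^esub> f)" using fi by (simp add: continuous_map_const)
    have "continuous_map T (prod_topology T T) (\<lambda>x. (inv\<^bsub>G\<^esub> f, x))"
      by (rule continuous_map_pairedI[OF k continuous_map_id[unfolded id_def]])
    from continuous_map_compose[OF this cm] show ?thesis by (simp add: o_def)
  qed
  have c2: "continuous_map T T (\<lambda>x. inv\<^bsub>G\<^esub> f \<otimes>\<^bsub>G\<^esub> x \<otimes>\<^bsub>G\<^esub> f)"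
  proof -
    have k: "continuous_map T T (\<lambda>x. f)" using f top by (simp add: continuous_map_const)
    have "continuous_map T (prod_topology T T) (\<lambda>x. (inv\<^bsub>G\<^esub> f \<otimes>\<^bsub>G\<^esub> x, f))"
      by (rule continuous_map_pairedI[OF c1 k])
    from continuous_map_compose[OF this cm] show ?thesis by (simp add: o_def)
  qed
  then show ?thesis .
qed




context group begin

lemma prods_three:
  assumes "a \<in> S" "b \<in> S" "c \<in> S" "S \<subseteq> carrier G"
  shows "a \<otimes> b \<otimes> c \<in> prods G S 3"
proof -
  have c: "a \<in> carrier G" "b \<in> carrier G" "c \<in> carrier G" using assms by auto
  have "c \<otimes> \<one> \<in> prods G S (Suc 0)" unfolding prods.simps using assms(3) by blast
  then have "b \<otimes> (c \<otimes> \<one>) \<in> prods G S (Suc (Suc 0))" unfolding prods.simps(2)[of G S "Suc 0"] using assms(2) by blast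
  then have "a \<otimes> (b \<otimes> (c \<otimes> \<one>)) \<in> prods G S (Suc (Suc (Suc 0)))" unfolding prods.simps(2)[of G S "Suc (Suc 0)"] using assms(1) by blast
  moreover have "a \<otimes> (b \<otimes> (c \<otimes> \<one>)) = a \<otimes> b \<otimes> c" using c by (simp add: m_assoc)
  ultimately show ?thesis by (simp add: numeral_3_eq_3)
qed

lemma tg_sin:
  assumes tg: "topological_group G T" and tb: "totally_bounded_group G T"
    and V: "openin T V" "\<one> \<in> V"
  shows "\<exists>W. openin T W \<and> \<one> \<in> W \<and> (\<forall>g\<in>carrier G. \<forall>w\<in>W. g \<otimes> w \<otimes> inv g \<in> V \<and> g \<otimes> inv w \<otimes> inv g \<in> V)"
proof -
  have top: "topspace T = carrier G" and ci: "continuous_map T T (\<lambda>x. inv x)"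
    using tg unfolding topological_group_def by auto
  obtain V1 where V1: "openin T V1" "\<one> \<in> V1" "prods G V1 3 \<subseteq> V"
    using tg_small_prods[OF tg V] by blast
  have V1c: "V1 \<subseteq> carrier G" using openin_subset[OF V1(1)] top by auto
  define V0 where "V0 = V1 \<inter> {x \<in> topspace T. inv x \<in> V1}"
  have V0o: "openin T V0" unfolding V0_def
    using openin_continuous_map_preimage[OF ci V1(1)] V1(1) by auto
  have V0c: "V0 \<subseteq> carrier G" using V1c V0_def by auto
  have V0s: "\<And>x. x \<in> V0 \<Longrightarrow> inv x \<in> V0" unfolding V0_def using V1c top by auto
  have V01: "V0 \<subseteq> V1" unfolding V0_def by auto
  have one0: "\<one> \<in> V0" unfolding V0_def using V1 top by auto
  have "nbhd T \<one> V0" unfolding nbhd_def using V0o one0 openin_subset[OF V0o] by auto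
  note exF = tb[unfolded totally_bounded_group_def, rule_format, OF this]
  then obtain F where F: "finite F" "F \<subseteq> carrier G" "carrier G = {f \<otimes> u | f u. f \<in> F \<and> u \<in> V0}"
    by (elim exE conjE)
  define W where "W = {w \<in> topspace T. \<forall>f\<in>F. inv f \<otimes> w \<otimes> f \<in> V0}"
  have "\<And>F'. finite F' \<Longrightarrow> F' \<subseteq> carrier G \<Longrightarrow> openin T {w \<in> topspace T. \<forall>f\<in>F'. inv f \<otimes> w \<otimes> f \<in> V0}"
  proof -
    fix F' :: "'a set" assume "finite F'" "F' \<subseteq> carrier G"
    then show "openin T {w \<in> topspace T. \<forall>f\<in>F'. inv f \<otimes> w \<otimes> f \<in> V0}"
    proof (induct F' rule: finite_induct)
      case empty then show ?case by simp
    next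
      case (insert f F')
      have "{w \<in> topspace T. \<forall>f\<in>insert f F'. inv f \<otimes> w \<otimes> f \<in> V0}
          = {w \<in> topspace T. inv f \<otimes> w \<otimes> f \<in> V0} \<inter> {w \<in> topspace T. \<forall>f\<in>F'. inv f \<otimes> w \<otimes> f \<in> V0}"
        by auto
      moreover have "openin T {w \<in> topspace T. inv f \<otimes> w \<otimes> f \<in> V0}"
        using openin_continuous_map_preimage[OF tg_conj_cont[OF tg] V0o] insert.prems by auto
      ultimately show ?case using insert by auto
    qed
  qed
  then have Wo: "openin T W" unfolding W_def using F by auto
  have W1: "\<one> \<in> W" unfolding W_def using one0 top F(2) by auto
  have "\<forall>g\<in>carrier G. \<forall>w\<in>W. g \<otimes> w \<otimes> inv g \<in> V \<and> g \<otimes> inv w \<otimes> inv g \<in> V"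
  proof (intro ballI)
    fix g w assume g: "g \<in> carrier G" and w: "w \<in> W"
    have wc: "w \<in> carrier G" using w top W_def by auto
    have "inv g \<in> carrier G" using g by simp
    then obtain f u where fu: "inv g = f \<otimes> u" "f \<in> F" "u \<in> V0" using F(3) by blast
    have fc: "f \<in> carrier G" and uc: "u \<in> carrier G" using fu F(2) V0c by auto
    have gg: "g = inv u \<otimes> inv f"
    proof -
      have "g = inv (inv g)" using g by simp
      also have "\<dots> = inv u \<otimes> inv f" using fu fc uc by (simp add: inv_mult_group)
      finally show ?thesis .
    qed
    define c where "c = inv f \<otimes> w \<otimes> f"
    have c: "c \<in> V0" using w fu unfolding W_def c_def by auto
    have cc: "c \<in> carrier G" using c V0c by auto
    have ic: "inv f \<otimes> inv w \<otimes> f = inv c"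
      unfolding c_def using fc wc by (simp add: inv_mult_group m_assoc)
    have e1: "g \<otimes> w \<otimes> inv g = inv u \<otimes> c \<otimes> u"
      unfolding c_def using fu(1) gg fc uc wc by (simp add: m_assoc)
    have e2: "g \<otimes> inv w \<otimes> inv g = inv u \<otimes> inv c \<otimes> u"
      unfolding ic[symmetric] using fu(1) gg fc uc wc by (simp add: m_assoc)
    have "inv u \<otimes> c \<otimes> u \<in> prods G V1 3"
      by (rule prods_three) (use V0s fu c V01 V1c in auto)
    moreover have "inv u \<otimes> inv c \<otimes> u \<in> prods G V1 3"
      by (rule prods_three) (use V0s fu c V01 V1c in auto)
    ultimately show "g \<otimes> w \<otimes> inv g \<in> V \<and> g \<otimes> inv w \<otimes> inv g \<in> V"
      using e1 e2 V1(3) by auto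
  qed
  then show ?thesis using Wo W1 by blast
qed

end


context group begin

lemma main_aux:
  assumes tg: "topological_group G T" and tb: "totally_bounded_group G T"
    and sm: "sum_list m = 0" and U: "nbhd T \<one> U"
  shows "ramsey_product_subset G m U"
proof -
  have top: "topspace T = carrier G" using tg unfolding topological_group_def by auto
  obtain U0 where U0: "openin T U0" "\<one> \<in> U0" "U0 \<subseteq> U" using U unfolding nbhd_def by blast
  define k where "k = length m"
  define N where "N = sum_list (map (\<lambda>i. nat \<bar>m ! i\<bar>) [0..<k])"
  obtain V where V: "openin T V" "\<one> \<in> V" "prods G V N \<subseteq> U0"
    using tg_small_prods[OF tg U0(1,2)] by blast
  obtain W where W: "openin T W" "\<one> \<in> W"
      "\<forall>g\<in>carrier G. \<forall>w\<in>W. g \<otimes> w \<otimes> inv g \<in> V \<and> g \<otimes> inv w \<otimes> inv g \<in> V"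
    using tg_sin[OF tg tb V(1,2)] by blast
  have Wc: "W \<subseteq> carrier G" using openin_subset[OF W(1)] top by auto
  define C where "C = {g \<otimes> w \<otimes> inv g | g w. g \<in> carrier G \<and> w \<in> carrier G \<and> (w \<in> W \<or> inv w \<in> W)}"
  have Cc: "C \<subseteq> carrier G" unfolding C_def by auto
  have CV: "C \<subseteq> V"
  proof
    fix x assume "x \<in> C"
    then obtain g w where gw: "x = g \<otimes> w \<otimes> inv g" "g \<in> carrier G" "w \<in> carrier G" "w \<in> W \<or> inv w \<in> W"
      unfolding C_def by blast
    show "x \<in> V"
    proof (cases "w \<in> W")
      case True then show ?thesis using W(3) gw by auto
    next
      case False
      then have "inv w \<in> W" using gw by auto
      then have "g \<otimes> inv (inv w) \<otimes> inv g \<in> V" using W(3) gw by blast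
      then show ?thesis using gw by simp
    qed
  qed
  have hc: "\<And>h s. h \<in> carrier G \<Longrightarrow> s \<in> C \<Longrightarrow> h \<otimes> s \<otimes> inv h \<in> C"
  proof -
    fix h s assume h: "h \<in> carrier G" and "s \<in> C"
    then obtain g w where gw: "s = g \<otimes> w \<otimes> inv g" "g \<in> carrier G" "w \<in> carrier G" "w \<in> W \<or> inv w \<in> W"
      unfolding C_def by blast
    have "h \<otimes> s \<otimes> inv h = (h \<otimes> g) \<otimes> w \<otimes> inv (h \<otimes> g)"
      using gw h by (simp add: m_assoc inv_mult_group)
    then show "h \<otimes> s \<otimes> inv h \<in> C" unfolding C_def using gw h by blast
  qed
  have hi: "\<And>s. s \<in> C \<Longrightarrow> inv s \<in> C"
  proof -
    fix s assume "s \<in> C"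
    then obtain g w where gw: "s = g \<otimes> w \<otimes> inv g" "g \<in> carrier G" "w \<in> carrier G" "w \<in> W \<or> inv w \<in> W"
      unfolding C_def by blast
    have "inv s = g \<otimes> inv w \<otimes> inv g"
      using gw by (simp add: m_assoc inv_mult_group)
    moreover have "inv w \<in> W \<or> inv (inv w) \<in> W" using gw by auto
    ultimately show "inv s \<in> C" unfolding C_def using gw by blast
  qed
  have WC: "W \<subseteq> C"
  proof
    fix w assume w: "w \<in> W"
    then have "w = \<one> \<otimes> w \<otimes> inv \<one>" using Wc by auto
    then show "w \<in> C" unfolding C_def using w Wc by blast
  qed
  have PU: "prods G C N \<subseteq> U" using prods_mono[OF CV, of N] V(3) U0(3) by auto
  show ?thesis unfolding ramsey_product_subset_def k_def[symmetric]
  proof (intro allI impI)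
    fix X assume X: "X \<subseteq> carrier G \<and> infinite X"
    have "nbhd T \<one> W" unfolding nbhd_def using W(1,2) openin_subset[OF W(1)] by auto
    note exF = tb[unfolded totally_bounded_group_def, rule_format, OF this]
    then obtain F where F: "finite F" "F \<subseteq> carrier G" "carrier G = {f \<otimes> u | f u. f \<in> F \<and> u \<in> W}"
      by (elim exE conjE)
    have Xeq: "X = (\<Union>f\<in>F. X \<inter> {f \<otimes> u | u. u \<in> W})"
    proof
      show "X \<subseteq> (\<Union>f\<in>F. X \<inter> {f \<otimes> u | u. u \<in> W})"
      proof
        fix x assume "x \<in> X"
        then have "x \<in> carrier G" using X by auto
        then have "x \<in> {f \<otimes> u | f u. f \<in> F \<and> u \<in> W}" using F(3) by simp
        then obtain f u where "x = f \<otimes> u" "f \<in> F" "u \<in> W" by blast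
        then show "x \<in> (\<Union>f\<in>F. X \<inter> {f \<otimes> u | u. u \<in> W})" using \<open>x \<in> X\<close> by blast
      qed
    qed blast
    have "\<exists>f\<in>F. infinite (X \<inter> {f \<otimes> u | u. u \<in> W})"
    proof (rule ccontr)
      assume "\<not> ?thesis"
      then have "finite (\<Union>f\<in>F. X \<inter> {f \<otimes> u | u. u \<in> W})"
        using F(1) by (intro finite_UN_I) auto
      then have "finite X" using Xeq by simp
      then show False using X by simp
    qed
    then obtain f where f: "f \<in> F" "infinite (X \<inter> {f \<otimes> u | u. u \<in> W})" by blast
    have fc: "f \<in> carrier G" using f F(2) by auto
    obtain B where B: "finite B" "card B = k" "B \<subseteq> X \<inter> {f \<otimes> u | u. u \<in> W}"
      using infinite_arbitrarily_large[OF f(2)] by blast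
    obtain x where x: "bij_betw x {0..<k} B" using ex_bij_betw_nat_finite[OF B(1)] B(2) by blast
    have xB: "\<And>i. i < k \<Longrightarrow> x i \<in> B" using x by (auto simp: bij_betw_def)
    define ws where "ws j = inv f \<otimes> x j" for j
    have ws: "\<And>j. j < k \<Longrightarrow> ws j \<in> W \<and> f \<otimes> ws j = x j"
    proof -
      fix j assume "j < k"
      then obtain u where u: "x j = f \<otimes> u" "u \<in> W" using xB B(3) by blast
      then have "ws j = u" unfolding ws_def using fc Wc by (auto simp: inv_cancel_l)
      then show "ws j \<in> W \<and> f \<otimes> ws j = x j" using u by auto
    qed
    show "\<exists>x. (\<forall>i<k. x i \<in> X) \<and> inj_on x {..<k} \<and>
             (\<forall>\<sigma>. \<sigma> permutes {..<k} \<longrightarrow>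
                gprod G (map (\<lambda>i. x (\<sigma> i) [^] (m ! i)) [0..<k]) \<in> U)"
    proof (rule exI[of _ x], intro conjI)
      show "\<forall>i<k. x i \<in> X" using xB B(3) by auto
      show "inj_on x {..<k}" using x by (simp add: bij_betw_def atLeast0LessThan)
    next
      show "\<forall>\<sigma>. \<sigma> permutes {..<k} \<longrightarrow>
                gprod G (map (\<lambda>i. x (\<sigma> i) [^] (m ! i)) [0..<k]) \<in> U"
      proof (intro allI impI)
      fix \<sigma> assume \<sigma>: "\<sigma> permutes {..<k}"
      have sk: "\<And>i. i < k \<Longrightarrow> \<sigma> i < k" using permutes_in_image[OF \<sigma>] by auto
      have eq: "map (\<lambda>i. x (\<sigma> i) [^] (m ! i)) [0..<k] = map (\<lambda>i. (f \<otimes> ws (\<sigma> i)) [^] (m ! i)) [0..<k]"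
        using ws sk by auto
      obtain c where c: "c \<in> prods G C N"
        "gprod G (map (\<lambda>i. (f \<otimes> ws (\<sigma> i)) [^] (m ! i)) [0..<k]) = c \<otimes> f [^] (sum_list (map ((!) m) [0..<k]))"
        using prod_list_decomp[OF Cc hc hi fc, of "[0..<k]" "\<lambda>i. ws (\<sigma> i)" "(!) m"] ws sk WC
        unfolding N_def by fastforce
      have "sum_list (map ((!) m) [0..<k]) = 0" using sm unfolding k_def by (simp add: map_nth)
      then have "gprod G (map (\<lambda>i. x (\<sigma> i) [^] (m ! i)) [0..<k]) = c"
      proof -
        have "c \<in> carrier G" using c(1) Cc prods_carrier by auto
        then show ?thesis unfolding eq using c(2) \<open>sum_list (map ((!) m) [0..<k]) = 0\<close> by simp
      qed
      then show "gprod G (map (\<lambda>i. x (\<sigma> i) [^] (m ! i)) [0..<k]) \<in> U" using c PU by auto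
    qed
    qed
  qed
qed

end

theorem proposition5p1:
  fixes G :: "('a, 'b) monoid_scheme" and T :: "'a topology"
    and m :: "int list" and U :: "'a set"
  assumes "topological_group G T"
    and "totally_bounded_group G T"
    and "infinite (carrier G)"
    and "sum_list m = 0"
    and "nbhd T \<one>\<^bsub>G\<^esub> U"
  shows "ramsey_product_subset G m U"
proof -
  have "group G" using assms(1) unfolding topological_group_def by auto
  then show ?thesis using group.main_aux assms(1,2,4,5) by blast
qed

end
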